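(* Let $M,N\ge1$ be integers and let $f_0,\ldots,f_{K-1}$, $K\ge2$, be distinct functions $\mathbb{Z}_M\to\mathbb{Z}_N$. Let $\delta_{\min}$ be the minimum over all pairs $j\neq j'$ of the number of $x\in\mathbb{Z}_M$ with $f_j(x)\neq f_{j'}(x)$, and assume $\delta_{\min}<M$. If $C$ is a positive integer with $$C>\frac{\ln(K-1)}{\ln M-\ln(M-\delta_{\min})},$$ then the $C$-fold tensor powers $U_{f_0}^{\otimes C},\ldots,U_{f_{K-1}}^{\otimes C}$ of the standard oracle operators are unambiguously distinguishable.
   Context: For $f:\mathbb{Z}_M\to\mathbb{Z}_N$ the standard oracle operator is the unitary $U_f$ on $\mathcal{H}_M\otimes\mathcal{H}_N$ (with orthonormal bases $\{|x\rangle\}_{x\in\mathbb{Z}_M}$, $\{|y\rangle\}_{y\in\mathbb{Z}_N}$) given by $U_f|x\rangle\otimes|y\rangle=|x\rangle\otimes|y\oplus f(x)\rangle$, $\oplus$ being addition mod $N$; $U_f^{\otimes C}$ acts on $(\mathcal{H}_M\otimes\mathcal{H}_N)^{\otimes C}$ (parallel calls on separate registers). A finite list of unitary operators $W_1,\ldots,W_K$ on a finite-dimensional Hilbert space $\mathcal{H}$ is called unambiguously distinguishable if there exist a finite-dimensional ancilla space $\mathcal{H}_A$ and a unit vector $|\psi\rangle\in\mathcal{H}\otimes\mathcal{H}_A$ such that the vectors $(W_j\otimes\mathbb{1}_A)|\psi\rangle$ are linearly independent. *)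

theory Defs
  imports Complex_Main
begin

text \<open>Finite-dimensional Hilbert spaces are represented concretely by a finite set B of
  orthonormal basis labels; a vector is a function from labels to complex coefficients
  (vanishing outside B).\<close>

definition perm_op :: "'b set \<Rightarrow> ('b \<Rightarrow> 'b) \<Rightarrow> ('b \<Rightarrow> complex) \<Rightarrow> ('b \<Rightarrow> complex)" where
  "perm_op B \<pi> v = (\<lambda>b'. \<Sum>b\<in>B. if \<pi> b = b' then v b else 0)"

text \<open>Basis action of the standard oracle on H_M (x) H_N:  |x,y> |-> |x, y (+) f x>,
  with (+) addition mod N.\<close>
definition oracle_basis :: "nat \<Rightarrow> (nat \<Rightarrow> nat) \<Rightarrow> nat \<times> nat \<Rightarrow> nat \<times> nat" where
  "oracle_basis N f = (\<lambda>(x, y). (x, (y + f x) mod N))"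

text \<open>Basis labels of (H_M (x) H_N)^(x)C: length-C lists of pairs (x,y), x<M, y<N.\<close>
definition oracle_tp_basis :: "nat \<Rightarrow> nat \<Rightarrow> nat \<Rightarrow> (nat \<times> nat) list set" where
  "oracle_tp_basis M N C = {bs. length bs = C \<and> (\<forall>p\<in>set bs. fst p < M \<and> snd p < N)}"

text \<open>U_f^(x)C : acts on each of the C registers by U_f, i.e. on product basis vectors
  |b_1 ... b_C> |-> |U_f b_1 ... U_f b_C>, extended linearly.\<close>
definition oracle_tensor_power ::
  "nat \<Rightarrow> nat \<Rightarrow> nat \<Rightarrow> (nat \<Rightarrow> nat) \<Rightarrow> ((nat \<times> nat) list \<Rightarrow> complex) \<Rightarrow> ((nat \<times> nat) list \<Rightarrow> complex)" where
  "oracle_tensor_power M N C f = perm_op (oracle_tp_basis M N C) (map (oracle_basis N f))"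

text \<open>W (x) 1_A, where the ancilla H_A has orthonormal basis labelled by {..<d}.\<close>
definition tensor_id :: "(('b \<Rightarrow> complex) \<Rightarrow> ('b \<Rightarrow> complex)) \<Rightarrow> ('b \<times> nat \<Rightarrow> complex) \<Rightarrow> ('b \<times> nat \<Rightarrow> complex)" where
  "tensor_id W psi = (\<lambda>(b, a). W (\<lambda>b'. psi (b', a)) b)"

definition lin_indep_vecs :: "'c set \<Rightarrow> nat \<Rightarrow> (nat \<Rightarrow> 'c \<Rightarrow> complex) \<Rightarrow> bool" where
  "lin_indep_vecs S K v \<longleftrightarrow>
     (\<forall>c :: nat \<Rightarrow> complex. (\<forall>p\<in>S. (\<Sum>j<K. c j * v j p) = 0) \<longrightarrow> (\<forall>j<K. c j = 0))"

definition unamb_distinguishable ::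
  "'b set \<Rightarrow> nat \<Rightarrow> (nat \<Rightarrow> ('b \<Rightarrow> complex) \<Rightarrow> ('b \<Rightarrow> complex)) \<Rightarrow> bool" where
  "unamb_distinguishable B K W \<longleftrightarrow>
     (\<exists>(d::nat) (psi :: 'b \<times> nat \<Rightarrow> complex).
        (\<forall>p. p \<notin> B \<times> {..<d} \<longrightarrow> psi p = 0) \<and>
        (\<Sum>p\<in>B \<times> {..<d}. (cmod (psi p))\<^sup>2) = 1 \<and>
        lin_indep_vecs (B \<times> {..<d}) K (\<lambda>j. tensor_id (W j) psi))"

definition hamming_dist :: "nat \<Rightarrow> (nat \<Rightarrow> nat) \<Rightarrow> (nat \<Rightarrow> nat) \<Rightarrow> nat" where
  "hamming_dist M f g = card {x\<in>{..<M}. f x \<noteq> g x}"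

definition delta_min :: "nat \<Rightarrow> nat \<Rightarrow> (nat \<Rightarrow> nat \<Rightarrow> nat) \<Rightarrow> nat" where
  "delta_min M K fs = Min {hamming_dist M (fs j) (fs j') | j j'. j < K \<and> j' < K \<and> j \<noteq> j'}"

end

theory Submission
  imports Defs
begin

lemma perm_op_ind:
  assumes "finite B" "S \<subseteq> B" "inj_on \<pi> S"
  shows "perm_op B \<pi> (\<lambda>b. if b \<in> S then a else 0) b' = (if b' \<in> \<pi> ` S then a else 0)"
proof -
  have "perm_op B \<pi> (\<lambda>b. if b \<in> S then a else 0) b' =
    (\<Sum>b\<in>B. if b \<in> S then (\<lambda>b. if \<pi> b = b' then a else 0) b else 0)"
    unfolding perm_op_def by (rule sum.cong) auto
  also have "\<dots> = (\<Sum>b\<in>S. (\<lambda>y. if y = b' then a else 0) (\<pi> b))"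
  proof -
    have "B \<inter> S = S" using assms(2) by blast
    then show ?thesis using sum.inter_restrict[OF assms(1), of "\<lambda>b. if \<pi> b = b' then a else 0" S]
      by metis
  qed
  also have "\<dots> = (\<Sum>y\<in>\<pi> ` S. if y = b' then a else 0)"
    using sum.reindex[OF assms(3), of "\<lambda>y. if y = b' then a else 0"] by simp
  also have "\<dots> = (if b' \<in> \<pi> ` S then a else 0)"
    using finite_subset[OF assms(2,1)] by (simp add: sum.delta)
  finally show ?thesis .
qed

lemma map_image_lists:
  "map g ` {xs. set xs \<subseteq> Z \<and> length xs = n} = {xs. set xs \<subseteq> g ` Z \<and> length xs = n}"
proof
  show "map g ` {xs. set xs \<subseteq> Z \<and> length xs = n} \<subseteq> {xs. set xs \<subseteq> g ` Z \<and> length xs = n}"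
  proof (rule image_subsetI)
    fix xs assume "xs \<in> {xs. set xs \<subseteq> Z \<and> length xs = n}"
    then have "set xs \<subseteq> Z" "length xs = n" by auto
    then show "map g xs \<in> {xs. set xs \<subseteq> g ` Z \<and> length xs = n}"
      by auto
  qed
  show "{xs. set xs \<subseteq> g ` Z \<and> length xs = n} \<subseteq> map g ` {xs. set xs \<subseteq> Z \<and> length xs = n}"
  proof
    fix ys assume "ys \<in> {xs. set xs \<subseteq> g ` Z \<and> length xs = n}"
    then have "set ys \<subseteq> g ` Z" "length ys = n" by auto
    then show "ys \<in> map g ` {xs. set xs \<subseteq> Z \<and> length xs = n}"
    proof (induction ys arbitrary: n)
      case Nil then show ?case by auto
    next
      case (Cons y ys)
      then obtain z where z: "z \<in> Z" "y = g z" by auto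
      have "ys \<in> map g ` {xs. set xs \<subseteq> Z \<and> length xs = length ys}"
        using Cons.IH[of "length ys"] Cons.prems by simp
      then obtain xs where "set xs \<subseteq> Z" "length xs = length ys" "ys = map g xs"
        by blast
      then show ?case using z Cons.prems
        by (intro image_eqI[of _ _ "z # xs"]) auto
    qed
  qed
qed


theorem mainTheorem12:
  fixes M N K C :: nat and fs :: "nat \<Rightarrow> nat \<Rightarrow> nat"
  assumes "M \<ge> 1" and "N \<ge> 1" and "K \<ge> 2"
    and "\<forall>j<K. \<forall>x<M. fs j x < N"
    and "\<forall>j<K. \<forall>j'<K. j \<noteq> j' \<longrightarrow> (\<exists>x<M. fs j x \<noteq> fs j' x)"
    and "delta_min M K fs < M"
    and "C > 0"
    and "real C > ln (real K - 1) / (ln (real M) - ln (real M - real (delta_min M K fs)))"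
  shows "unamb_distinguishable (oracle_tp_basis M N C) K
           (\<lambda>j. oracle_tensor_power M N C (fs j))"
proof -
  note fsN = assms(4)
  define \<delta> where "\<delta> = delta_min M K fs"
  define H where "H = {hamming_dist M (fs j) (fs j') | j j'. j < K \<and> j' < K \<and> j \<noteq> j'}"
  have Hsub: "H \<subseteq> (\<lambda>(j, j'). hamming_dist M (fs j) (fs j')) ` ({..<K} \<times> {..<K})"
    unfolding H_def by force
  have finH: "finite H" by (rule finite_subset[OF Hsub]) auto
  have "hamming_dist M (fs 0) (fs 1) \<in> H" unfolding H_def using assms(3) by force
  then have Hne: "H \<noteq> {}" by blast
  have \<delta>H: "\<delta> = Min H" unfolding \<delta>_def delta_min_def H_def by simp
  have \<delta>le: "\<delta> \<le> hamming_dist M (fs j) (fs k)" if "j < K" "k < K" "j \<noteq> k" for j k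
  proof -
    have "hamming_dist M (fs j) (fs k) \<in> H" unfolding H_def using that by blast
    then show ?thesis unfolding \<delta>H using finH by simp
  qed
  have \<delta>pos: "\<delta> \<ge> 1"
  proof -
    have "\<delta> \<in> H" unfolding \<delta>H using finH Hne by (rule Min_in)
    then obtain j j' where jj: "j < K" "j' < K" "j \<noteq> j'" "\<delta> = hamming_dist M (fs j) (fs j')"
      unfolding H_def by blast
    then obtain x where "x < M" "fs j x \<noteq> fs j' x" using assms(5) by blast
    then have "{x\<in>{..<M}. fs j x \<noteq> fs j' x} \<noteq> {}" by auto
    then have "card {x\<in>{..<M}. fs j x \<noteq> fs j' x} > 0" by (simp add: card_gt_0_iff)
    then show ?thesis using jj(4) unfolding hamming_dist_def by simp
  qed
  have \<delta>M: "\<delta> < M" using assms(6) unfolding \<delta>_def .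
  have key: "real (K - 1) * real ((M - \<delta>) ^ C) < real (M ^ C)"
  proof -
    define m where "m = real M - real \<delta>"
    have m1: "m \<ge> 1" using \<delta>M unfolding m_def by simp
    have mM: "m < real M" using \<delta>pos unfolding m_def by simp
    have D: "ln (real M) - ln m > 0" using m1 mM by simp
    have "ln (real K - 1) < real C * (ln (real M) - ln m)"
      using assms(8) D unfolding m_def \<delta>_def by (simp add: pos_divide_less_eq)
    then have "ln (real K - 1) + real C * ln m < real C * ln (real M)"
      by (simp add: algebra_simps)
    moreover have "ln ((real K - 1) * m ^ C) = ln (real K - 1) + real C * ln m"
      using m1 assms(3) by (simp add: ln_mult ln_realpow)
    moreover have "ln (real M ^ C) = real C * ln (real M)"
      using assms(1) by (simp add: ln_realpow)
    ultimately have "ln ((real K - 1) * m ^ C) < ln (real M ^ C)" by simp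
    then have "(real K - 1) * m ^ C < real M ^ C"
      using m1 assms(1,3) by (subst (asm) ln_less_cancel_iff) auto
    moreover have "real (M - \<delta>) = m" using \<delta>M unfolding m_def by simp
    moreover have "real (K - 1) = real K - 1" using assms(3) by simp
    ultimately show ?thesis by simp
  qed
  define B where "B = oracle_tp_basis M N C"
  define P where "P j = (\<lambda>x::nat. (x, fs j x))" for j
  define A where "A j = P j ` {..<M}" for j
  define T where "T j = {xs. set xs \<subseteq> A j \<and> length xs = C}" for j
  define Z where "Z = (\<lambda>x::nat. (x, 0::nat)) ` {..<M}"
  define S0 where "S0 = {xs. set xs \<subseteq> Z \<and> length xs = C}"
  define r where "r = 1 / sqrt (real (M ^ C))"
  define a where "a = complex_of_real r"
  define psi where "psi = (\<lambda>(b::(nat \<times> nat) list, i::nat). if i = 0 \<and> b \<in> S0 then a else 0)"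
  define W where "W j = oracle_tensor_power M N C (fs j)" for j
  have finZ: "finite Z" unfolding Z_def by simp
  have cardZ: "card Z = M" unfolding Z_def by (subst card_image) (auto simp: inj_on_def)
  have finA: "finite (A j)" for j unfolding A_def by simp
  have cardA: "card (A j) = M" for j unfolding A_def P_def by (subst card_image) (auto simp: inj_on_def)
  have Bset: "B = {xs. set xs \<subseteq> {..<M} \<times> {..<N} \<and> length xs = C}"
    unfolding B_def oracle_tp_basis_def by force
  have finB: "finite B" unfolding Bset by (rule finite_lists_length_eq) simp
  have S0B: "S0 \<subseteq> B" unfolding S0_def Bset Z_def using assms(2) by force
  have TB: "T j \<subseteq> B" if "j < K" for j
    unfolding T_def Bset A_def P_def using fsN that by force
  have cardS0: "card S0 = M ^ C" unfolding S0_def using card_lists_length_eq[OF finZ] cardZ by simp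
  have MC: "real (M ^ C) > 0" using assms(1) by simp
  have r2: "r ^ 2 = 1 / real (M ^ C)" unfolding r_def using MC by (simp add: power_divide)
  have outv: "tensor_id (W j) psi (b, 0) = (if b \<in> T j then a else 0)" if "j < K" for j b
  proof -
    define ob where "ob = oracle_basis N (fs j)"
    have obZ: "ob ` Z = A j"
      unfolding ob_def oracle_basis_def Z_def A_def P_def using fsN that by (force simp: image_image)
    have injZ: "inj_on ob Z" unfolding ob_def oracle_basis_def Z_def by (auto simp: inj_on_def)
    have "\<Union> (set ` S0) \<subseteq> Z" unfolding S0_def by blast
    then have inj: "inj_on (map ob) S0" by (intro inj_on_mapI inj_on_subset[OF injZ])
    have img: "map ob ` S0 = T j" unfolding S0_def T_def map_image_lists obZ ..
    have "tensor_id (W j) psi (b, 0) = perm_op B (map ob) (\<lambda>b. if b \<in> S0 then a else 0) b"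
      unfolding tensor_id_def W_def oracle_tensor_power_def psi_def B_def ob_def by simp
    also have "\<dots> = (if b \<in> T j then a else 0)"
      using perm_op_ind[OF finB S0B inj] img by simp
    finally show ?thesis .
  qed
  define g where "g k j = card (T k \<inter> T j)" for k j
  have TT: "T k \<inter> T j = {xs. set xs \<subseteq> A k \<inter> A j \<and> length xs = C}" for k j
    unfolding T_def by blast
  have gkk: "g k k = M ^ C" for k unfolding g_def T_def using card_lists_length_eq[OF finA] cardA by simp
  have gkj: "g k j \<le> (M - \<delta>) ^ C" if "k < K" "j < K" "k \<noteq> j" for k j
  proof -
    have "A k \<inter> A j = P k ` {x\<in>{..<M}. fs k x = fs j x}"
    proof (intro equalityI subsetI)
      fix p assume "p \<in> A k \<inter> A j"
      then obtain x y where xy: "x < M" "p = (x, fs k x)" "p = (y, fs j y)"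
        unfolding A_def P_def by blast
      then have "fs k x = fs j x" by (metis prod.inject)
      then show "p \<in> P k ` {x\<in>{..<M}. fs k x = fs j x}" unfolding P_def
        using xy(1,2) by (intro image_eqI[of _ _ x]) auto
    next
      fix p assume "p \<in> P k ` {x\<in>{..<M}. fs k x = fs j x}"
      then obtain x where "x < M" "fs k x = fs j x" "p = (x, fs k x)"
        unfolding P_def by blast
      then have "p \<in> (\<lambda>x. (x, fs k x)) ` {..<M}" "p \<in> (\<lambda>x. (x, fs j x)) ` {..<M}"
        by (auto intro!: image_eqI[of _ _ x])
      then show "p \<in> A k \<inter> A j" unfolding A_def P_def by blast
    qed
    then have c1: "card (A k \<inter> A j) = card {x\<in>{..<M}. fs k x = fs j x}"
      by (simp add: card_image inj_on_def P_def)
    have "card {x\<in>{..<M}. fs k x = fs j x} + card {x\<in>{..<M}. fs k x \<noteq> fs j x} = M"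
    proof -
      have "{x\<in>{..<M}. fs k x = fs j x} \<union> {x\<in>{..<M}. fs k x \<noteq> fs j x} = {..<M}" by blast
      moreover have "card ({x\<in>{..<M}. fs k x = fs j x} \<union> {x\<in>{..<M}. fs k x \<noteq> fs j x})
        = card {x\<in>{..<M}. fs k x = fs j x} + card {x\<in>{..<M}. fs k x \<noteq> fs j x}"
        by (rule card_Un_disjoint) auto
      ultimately show ?thesis by simp
    qed
    then have "card (A k \<inter> A j) \<le> M - \<delta>"
      using c1 \<delta>le[OF that] unfolding hamming_dist_def by simp
    then have "card (A k \<inter> A j) ^ C \<le> (M - \<delta>) ^ C" by (rule power_mono) simp
    then show ?thesis unfolding g_def TT using card_lists_length_eq[of "A k \<inter> A j" C] finA by simp
  qed
  have a0: "a \<noteq> 0" unfolding a_def r_def using MC by simp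
  have li: "lin_indep_vecs (B \<times> {..<1}) K (\<lambda>j. tensor_id (W j) psi)"
    unfolding lin_indep_vecs_def
  proof (rule allI, rule impI)
    fix c :: "nat \<Rightarrow> complex"
    assume hc: "\<forall>p\<in>B \<times> {..<1}. (\<Sum>j<K. c j * tensor_id (W j) psi p) = 0"
    have hb: "(\<Sum>j<K. if b \<in> T j then c j else 0) = 0" if "b \<in> B" for b
    proof -
      have "0 = (\<Sum>j<K. c j * tensor_id (W j) psi (b, 0))" using hc that by auto
      also have "\<dots> = (\<Sum>j<K. a * (if b \<in> T j then c j else 0))"
        by (rule sum.cong) (auto simp: outv)
      also have "\<dots> = a * (\<Sum>j<K. if b \<in> T j then c j else 0)" by (simp add: sum_distrib_left)
      finally show ?thesis using a0 by simp
    qed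
    have eq: "(\<Sum>j<K. c j * of_nat (g k j)) = 0" if "k < K" for k
    proof -
      have "0 = (\<Sum>b\<in>T k. \<Sum>j<K. if b \<in> T j then c j else 0)"
        using hb TB[OF that] by (simp add: subset_iff)
      also have "\<dots> = (\<Sum>j<K. \<Sum>b\<in>T k. if b \<in> T j then c j else 0)" by (rule sum.swap)
      also have "\<dots> = (\<Sum>j<K. c j * of_nat (g k j))"
      proof (rule sum.cong[OF refl])
        fix j
        have fT: "finite (T k)" unfolding T_def using finite_lists_length_eq[OF finA] by simp
        have "(\<Sum>b\<in>T k. if b \<in> T j then c j else 0) = (\<Sum>b\<in>T k \<inter> T j. c j)"
          using sum.inter_restrict[OF fT, of "\<lambda>_. c j" "T j"] by simp
        then show "(\<Sum>b\<in>T k. if b \<in> T j then c j else 0) = c j * of_nat (g k j)"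
          unfolding g_def by (simp add: mult.commute)
      qed
      finally show ?thesis by simp
    qed
    obtain k where k: "k < K" "\<forall>j<K. cmod (c j) \<le> cmod (c k)"
    proof -
      have "finite (cmod ` c ` {..<K})" "cmod ` c ` {..<K} \<noteq> {}"
        using assms(3) by (auto simp: lessThan_empty_iff)
      then have "Max (cmod ` c ` {..<K}) \<in> cmod ` c ` {..<K}" by (rule Max_in)
      then obtain k where "k < K" "Max (cmod ` c ` {..<K}) = cmod (c k)" by auto
      moreover have "\<forall>j<K. cmod (c j) \<le> Max (cmod ` c ` {..<K})" by simp
      ultimately show ?thesis using that by metis
    qed
    define R where "R = {..<K} - {k}"
    have cardR: "card R = K - 1" unfolding R_def using k(1) by simp
    have "(\<Sum>j<K. c j * of_nat (g k j)) = c k * of_nat (g k k) + (\<Sum>j\<in>R. c j * of_nat (g k j))"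
      unfolding R_def using k(1) by (simp add: sum.remove)
    then have "c k * of_nat (M ^ C) = - (\<Sum>j\<in>R. c j * of_nat (g k j))"
      using eq[OF k(1)] gkk by (simp add: eq_neg_iff_add_eq_0)
    then have "cmod (c k) * real (M ^ C) = cmod (\<Sum>j\<in>R. c j * of_nat (g k j))"
      by (metis norm_minus_cancel norm_mult norm_of_nat)
    also have "\<dots> \<le> (\<Sum>j\<in>R. cmod (c j * of_nat (g k j)))" by (rule norm_sum)
    also have "\<dots> \<le> (\<Sum>j\<in>R. cmod (c k) * real ((M - \<delta>) ^ C))"
    proof (rule sum_mono)
      fix j assume "j \<in> R"
      then have j: "j < K" "k \<noteq> j" unfolding R_def by auto
      have "cmod (c j * of_nat (g k j)) = cmod (c j) * real (g k j)"
        by (simp add: norm_mult)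
      also have "\<dots> \<le> cmod (c k) * real ((M - \<delta>) ^ C)"
        using k(2) j gkj[OF k(1) j(1) j(2)] by (intro mult_mono) auto
      finally show "cmod (c j * of_nat (g k j)) \<le> cmod (c k) * real ((M - \<delta>) ^ C)" .
    qed
    also have "\<dots> = cmod (c k) * (real (K - 1) * real ((M - \<delta>) ^ C))"
      using cardR by simp
    finally have ineq: "cmod (c k) * real (M ^ C) \<le> cmod (c k) * (real (K - 1) * real ((M - \<delta>) ^ C))" .
    have ck0: "cmod (c k) = 0"
    proof (rule ccontr)
      assume "cmod (c k) \<noteq> 0"
      then have "cmod (c k) > 0" by simp
      then have "real (M ^ C) \<le> real (K - 1) * real ((M - \<delta>) ^ C)"
        using ineq by (simp add: mult_le_cancel_left_pos)
      then show False using key by simp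
    qed
    show "\<forall>j<K. c j = 0" using k(2) ck0 by (metis norm_le_zero_iff)
  qed
  have supp: "\<forall>p. p \<notin> B \<times> {..<1} \<longrightarrow> psi p = 0"
    unfolding psi_def using S0B by auto
  have "r \<ge> 0" unfolding r_def by simp
  then have ar: "cmod a = r" unfolding a_def by simp
  have norm1: "(\<Sum>p\<in>B \<times> {..<1}. (cmod (psi p))\<^sup>2) = 1"
  proof -
    have BB: "B \<times> {..<1::nat} = (\<lambda>b. (b, 0)) ` B" by auto
    have "(\<Sum>p\<in>B \<times> {..<1}. (cmod (psi p))\<^sup>2) = (\<Sum>b\<in>B. (cmod (psi (b, 0)))\<^sup>2)"
      unfolding BB by (subst sum.reindex) (auto simp: inj_on_def)
    also have "\<dots> = (\<Sum>b\<in>B. if b \<in> S0 then r ^ 2 else 0)"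
      by (rule sum.cong) (auto simp: psi_def ar)
    also have "\<dots> = (\<Sum>b\<in>B \<inter> S0. r ^ 2)" using sum.inter_restrict[OF finB, of "\<lambda>_. r ^ 2" S0] by simp
    also have "\<dots> = real (card S0) * r ^ 2" using S0B by (simp add: Int_absorb1)
    also have "\<dots> = 1" using cardS0 r2 MC by simp
    finally show ?thesis .
  qed
  show ?thesis
    unfolding unamb_distinguishable_def
    using supp norm1 li unfolding B_def W_def by blast
qed

end
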